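(* $\mathrm{Sort}(\mathrm{SC}_{3\underline{21}})$ is a permutation class.
   Context: $\mathfrak S_n$ is the set of permutations of $\{1,\dots,n\}$. A permutation $\pi$ contains a (classical) permutation $\tau$ if some subsequence of $\pi$ has the same relative order as $\tau$. A permutation class is a set $\Pi$ of permutations such that every permutation contained in some $\pi\in\Pi$ is also in $\Pi$. A vincular pattern is a permutation with some entries underlined; a sequence contains it if it has a subsequence with the same relative order in which entries corresponding to adjacent underlined entries occupy consecutive positions. An occurrence of $3\underline{21}$ is $a_i a_j a_{j+1}$ with $i<j$ and $a_{j+1}<a_j<a_i$. For a pattern $\sigma$, the map $\mathrm{SC}_\sigma$ acts on $\tau$: read entries left to right; when the next entry $x$ is read, if pushing $x$ yields a stack whose entries read top to bottom (stack adjacency = consecutive positions) avoid $\sigma$, push $x$; otherwise pop the top stack entry to the output and repeat. At the end pop all remaining entries; the output is $\mathrm{SC}_\sigma(\tau)$. West's stack-sorting map is $s=\mathrm{SC}_{21}$. $\mathrm{Sort}_n(\mathrm{SC}_\sigma)=\{\tau\in\mathfrak S_n : s(\mathrm{SC}_\sigma(\tau))=12\cdots n\}$ and $\mathrm{Sort}(\mathrm{SC}_\sigma)=\bigcup_{n\ge1}\mathrm{Sort}_n(\mathrm{SC}_\sigma)$. *)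

theory Defs
  imports Main "HOL-Library.Sublist"
begin

text \<open>Permutations of {1..n} are represented as lists of naturals (one-line notation).\<close>

definition is_perm :: "nat list \<Rightarrow> bool" where
  "is_perm xs \<longleftrightarrow> distinct xs \<and> set xs = {1..length xs}"

definition perms :: "nat \<Rightarrow> nat list set" where
  "perms n = {xs. length xs = n \<and> is_perm xs}"

definition same_order :: "nat list \<Rightarrow> nat list \<Rightarrow> bool" where
  "same_order xs ys \<longleftrightarrow> length xs = length ys \<and>
     (\<forall>i<length xs. \<forall>j<length xs. (xs ! i < xs ! j) \<longleftrightarrow> (ys ! i < ys ! j))"

definition contains :: "nat list \<Rightarrow> nat list \<Rightarrow> bool" where
  "contains pi tau \<longleftrightarrow> (\<exists>ys. subseq ys pi \<and> same_order ys tau)"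

text \<open>Permutation classes. Permutations are nonempty (elements of S_n, n >= 1).\<close>
definition perm_class :: "nat list set \<Rightarrow> bool" where
  "perm_class P \<longleftrightarrow> (\<forall>pi\<in>P. is_perm pi \<and> pi \<noteq> []) \<and>
     (\<forall>pi\<in>P. \<forall>tau. is_perm tau \<and> tau \<noteq> [] \<and> contains pi tau \<longrightarrow> tau \<in> P)"

text \<open>A vincular pattern: a permutation p together with a set A of (0-based) positions i
  such that entries i and i+1 of p are underlined together (must be adjacent).\<close>
type_synonym vpattern = "nat list \<times> nat set"

definition vcontains :: "nat list \<Rightarrow> vpattern \<Rightarrow> bool" where
  "vcontains s sigma \<longleftrightarrow> (\<exists>idx. length idx = length (fst sigma) \<and> sorted_wrt (<) idx \<and>
     (\<forall>k\<in>set idx. k < length s) \<and> same_order (map ((!) s) idx) (fst sigma) \<and>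
     (\<forall>i\<in>snd sigma. Suc i < length idx \<longrightarrow> idx ! Suc i = Suc (idx ! i)))"

text \<open>The stack is a list with its top at the head,
  so the list itself reads the stack from top to bottom. Arguments: pattern, remaining input,
  stack, output so far. (Pushing onto the empty stack is always allowed; this agrees with the
  informal rule for every pattern of length at least 2.)\<close>
function sc_run :: "vpattern \<Rightarrow> nat list \<Rightarrow> nat list \<Rightarrow> nat list \<Rightarrow> nat list" where
  "sc_run sigma [] st out = out @ st"
| "sc_run sigma (x # xs) [] out = sc_run sigma xs [x] out"
| "sc_run sigma (x # xs) (y # st) out =
     (if \<not> vcontains (x # y # st) sigma then sc_run sigma xs (x # y # st) out
      else sc_run sigma (x # xs) st (out @ [y]))"
  by pat_completeness auto
termination
  by (relation "measure (\<lambda>(sigma, xs, st, out). 2 * length xs + length st)") auto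

definition SC :: "vpattern \<Rightarrow> nat list \<Rightarrow> nat list" where
  "SC sigma tau = sc_run sigma tau [] []"

definition west_s :: "nat list \<Rightarrow> nat list" where
  "west_s = SC ([2, 1], {})"

definition Sort_n :: "vpattern \<Rightarrow> nat \<Rightarrow> nat list set" where
  "Sort_n sigma n = {tau \<in> perms n. west_s (SC sigma tau) = [1..<Suc n]}"

definition Sort :: "vpattern \<Rightarrow> nat list set" where
  "Sort sigma = (\<Union>n\<in>{1..}. Sort_n sigma n)"

text \<open>The vincular pattern 3 underline{21}: entries at positions 1 and 2 (0-based) adjacent.\<close>
definition pat_3_21 :: vpattern where
  "pat_3_21 = ([3, 2, 1], {1})"

end

theory Submission
  imports Defs "HOL-Library.Multiset"
begin


definition has231 :: "nat list \<Rightarrow> bool" where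
  "has231 w \<longleftrightarrow> (\<exists>a b c. subseq [b,c,a] w \<and> a < b \<and> b < c)"
definition noAsc3 :: "nat list \<Rightarrow> bool" where
  "noAsc3 w \<longleftrightarrow> \<not>(\<exists>u v x y z. w = u @ [x,y] @ v \<and> z \<in> set v \<and> x < y \<and> y < z)"
definition goodP :: "nat list \<Rightarrow> bool" where
  "goodP w \<longleftrightarrow> \<not>(\<exists>a b c. subseq [a,b,c] w \<and> a < b \<and> a < c)"

lemma sub2_iff: "subseq [a,b] w \<longleftrightarrow> (\<exists>p q r. w = p @ a # q @ b # r)"
proof
  assume "subseq [a,b] w"
  then obtain p v vs where 1: "w = p @ v # vs" "a = v" "subseq [b] vs" by (auto dest: list_emb_ConsD)
  then have "b \<in> set vs" by (simp add: subseq_singleton_left)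
  then obtain q r where "vs = q @ b # r" using split_list[of b vs] by blast
  with 1 show "\<exists>p q r. w = p @ a # q @ b # r" by blast
next
  assume "\<exists>p q r. w = p @ a # q @ b # r"
  then obtain p q r where w: "w = p @ a # q @ b # r" by blast
  have "subseq [b] (q @ b # r)" by (simp add: subseq_singleton_left)
  then have "subseq [a,b] (a # q @ b # r)" by simp
  then show "subseq [a,b] w" unfolding w by (rule list_emb_append2)
qed

lemma sub3_iff: "subseq [a,b,c] w \<longleftrightarrow> (\<exists>p q r s. w = p @ a # q @ b # r @ c # s)"
proof
  assume "subseq [a,b,c] w"
  then obtain p v vs where "w = p @ v # vs" "a = v" "subseq [b,c] vs" by (auto dest: list_emb_ConsD)
  moreover then obtain q r s where "vs = q @ b # r @ c # s" by (auto simp: sub2_iff)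
  ultimately show "\<exists>p q r s. w = p @ a # q @ b # r @ c # s" by blast
next
  assume "\<exists>p q r s. w = p @ a # q @ b # r @ c # s"
  then obtain p q r s where w: "w = p @ a # q @ b # r @ c # s" by blast
  have "subseq [b,c] (q @ b # r @ c # s)" by (auto simp: sub2_iff)
  then have "subseq [a,b,c] (a # q @ b # r @ c # s)" by simp
  then show "subseq [a,b,c] w" unfolding w by (rule list_emb_append2)
qed

lemma subseq_rev: "subseq xs ys \<Longrightarrow> subseq (rev xs) (rev ys)"
  by (induction rule: list_emb.induct) (auto simp: subseq_rev_drop_many)

lemma sub3_idx: "subseq [a,b,c] w \<Longrightarrow> \<exists>i j k. i < j \<and> j < k \<and> k < length w \<and> w!i = a \<and> w!j = b \<and> w!k = c"
proof -
  assume "subseq [a,b,c] w"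
  then obtain p q r s where w: "w = p @ a # q @ b # r @ c # s" by (auto simp: sub3_iff)
  show ?thesis
    apply (rule exI[of _ "length p"], rule exI[of _ "length p + Suc (length q)"],
           rule exI[of _ "length p + Suc (length q) + Suc (length r)"])
    by (simp add: w nth_append)
qed

lemma sub_drop_Cons: "i < length xs \<Longrightarrow> subseq ys (drop (Suc i) xs) \<Longrightarrow> subseq (xs!i # ys) (drop i xs)"
  by (simp add: Cons_nth_drop_Suc[symmetric])

lemma sub_drop_le: "i \<le> j \<Longrightarrow> subseq ys (drop j xs) \<Longrightarrow> subseq ys (drop i xs)"
proof -
  assume "i \<le> j" "subseq ys (drop j xs)"
  have "drop i xs = take (j - i) (drop i xs) @ drop (j - i) (drop i xs)"
    by (rule append_take_drop_id[symmetric])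
  moreover have "drop (j - i) (drop i xs) = drop j xs" using \<open>i \<le> j\<close> by simp
  ultimately show ?thesis using \<open>subseq ys (drop j xs)\<close> by (metis subseq_drop_many)
qed

lemma idx_sub3: "i < j \<Longrightarrow> j < k \<Longrightarrow> k < length w \<Longrightarrow> subseq [w!i, w!j, w!k] w"
proof -
  assume h: "i < j" "j < k" "k < length w"
  have "subseq [w!k] (drop k w)" using h by (simp add: Cons_nth_drop_Suc[symmetric])
  then have "subseq [w!k] (drop (Suc j) w)" using h by (rule_tac sub_drop_le[of _ k]) auto
  then have "subseq [w!j, w!k] (drop j w)" using h by (rule_tac sub_drop_Cons) auto
  then have "subseq [w!j, w!k] (drop (Suc i) w)" using h by (rule_tac sub_drop_le[of _ j]) auto
  then have "subseq [w!i, w!j, w!k] (drop i w)" using h by (rule_tac sub_drop_Cons) auto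
  then have "subseq [w!i, w!j, w!k] (drop 0 w)" by (rule_tac sub_drop_le[of _ i]) auto
  then show ?thesis by simp
qed

lemma sc_prefix: "\<exists>r. sc_run \<sigma> xs st out = out @ r \<and> mset r = mset xs + mset st"
proof (induction \<sigma> xs st out rule: sc_run.induct)
  case (1 \<sigma> st out) then show ?case by simp
next
  case (2 \<sigma> x xs out) then show ?case by auto
next
  case (3 \<sigma> x xs y st out)
  show ?case
  proof (cases "vcontains (x # y # st) \<sigma>")
    case False
    with 3(1) obtain r where "sc_run \<sigma> xs (x # y # st) out = out @ r" "mset r = mset xs + mset (x # y # st)" by auto
    with False show ?thesis by auto
  next
    case True
    with 3(2) obtain r where "sc_run \<sigma> (x # xs) st (out @ [y]) = (out @ [y]) @ r" "mset r = mset (x#xs) + mset st" by auto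
    with True show ?thesis by (intro exI[of _ "y # r"]) auto
  qed
qed


lemma all2: "(\<forall>a<(2::nat). P a) \<longleftrightarrow> P 0 \<and> P 1"
  by (auto simp: numeral_2_eq_2 less_Suc_eq)
lemma all3: "(\<forall>a<(3::nat). P a) \<longleftrightarrow> P 0 \<and> P 1 \<and> P 2"
  by (auto simp: numeral_2_eq_2 numeral_3_eq_3 less_Suc_eq)

lemma len2: "length (idx::nat list) = 2 \<Longrightarrow> \<exists>i j. idx = [i,j]"
  by (auto simp: length_Suc_conv numeral_2_eq_2)
lemma len3: "length (idx::nat list) = 3 \<Longrightarrow> \<exists>i j k. idx = [i,j,k]"
  by (auto simp: length_Suc_conv numeral_3_eq_3)

lemma vc21: "vcontains s ([2,1],{}) \<longleftrightarrow> (\<exists>i j. i < j \<and> j < length s \<and> s!j < s!i)"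
proof
  assume "vcontains s ([2,1],{})"
  then obtain idx where h0: "length idx = length [2,1::nat]" "sorted_wrt (<) idx" "\<forall>k\<in>set idx. k < length s"
    "same_order (map ((!) s) idx) [2,1]" unfolding vcontains_def by (simp only: fst_conv) blast
  then have h: "length idx = 2" "sorted_wrt (<) idx" "\<forall>k\<in>set idx. k < length s"
    "same_order (map ((!) s) idx) [2,1]" by simp_all
  from len2[OF h(1)] obtain i j where idx: "idx = [i,j]" by blast
  from h(4) have so: "\<forall>a<2. \<forall>b<2. ([s!i,s!j] ! a < [s!i,s!j] ! b) \<longleftrightarrow> ([2,1::nat] ! a < [2,1::nat] ! b)"
    unfolding same_order_def idx by simp
  have "s!j < s!i" using so[rule_format, of 1 0] by simp
  then show "\<exists>i j. i < j \<and> j < length s \<and> s!j < s!i" using h idx by auto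
next
  assume "\<exists>i j. i < j \<and> j < length s \<and> s!j < s!i"
  then obtain i j where h: "i < j" "j < length s" "s!j < s!i" by auto
  have "same_order [s!i, s!j] [2,1]"
    unfolding same_order_def using h by (simp add: All_less_Suc)
  then show "vcontains s ([2,1],{})" unfolding vcontains_def
    using h by (intro exI[of _ "[i,j]"]) auto
qed

lemma vc321_idx: "vcontains s pat_3_21 \<longleftrightarrow> (\<exists>i j. i < j \<and> Suc j < length s \<and> s!j < s!i \<and> s!(Suc j) < s!j)"
proof
  assume "vcontains s pat_3_21"
  then have "\<exists>idx. length idx = length [3,2,1::nat] \<and> sorted_wrt (<) idx \<and> (\<forall>k\<in>set idx. k < length s) \<and>
    same_order (map ((!) s) idx) [3,2,1] \<and> (\<forall>i\<in>{1::nat}. Suc i < length idx \<longrightarrow> idx ! Suc i = Suc (idx ! i))"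
    by (simp only: vcontains_def pat_3_21_def fst_conv snd_conv)
  then obtain idx where h0: "length idx = length [3,2,1::nat] \<and> sorted_wrt (<) idx \<and> (\<forall>k\<in>set idx. k < length s) \<and>
    same_order (map ((!) s) idx) [3,2,1] \<and> (\<forall>i\<in>{1::nat}. Suc i < length idx \<longrightarrow> idx ! Suc i = Suc (idx ! i))"
    by (rule exE)
  then have h: "length idx = 3" "sorted_wrt (<) idx" "\<forall>k\<in>set idx. k < length s"
    "same_order (map ((!) s) idx) [3,2,1]" "Suc 1 < length idx \<longrightarrow> idx ! Suc 1 = Suc (idx ! 1)"
    by simp_all
  from len3[OF h(1)] obtain i j k where idx: "idx = [i,j,k]" by blast
  from h(4) have so: "\<forall>a<3. \<forall>b<3. ([s!i,s!j,s!k] ! a < [s!i,s!j,s!k] ! b) \<longleftrightarrow> ([3,2,1::nat] ! a < [3,2,1::nat] ! b)"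
    unfolding same_order_def idx by simp
  have "s!j < s!i" using so[rule_format, of 1 0] by simp
  moreover have "s!k < s!j" using so[rule_format, of 2 1] by simp
  moreover have "k = Suc j" using h(5) idx by simp
  ultimately show "\<exists>i j. i < j \<and> Suc j < length s \<and> s!j < s!i \<and> s!(Suc j) < s!j" using h idx
    by (intro exI[of _ i] exI[of _ j]) auto
next
  assume "\<exists>i j. i < j \<and> Suc j < length s \<and> s!j < s!i \<and> s!(Suc j) < s!j"
  then obtain i j where h: "i < j" "Suc j < length s" "s!j < s!i" "s!(Suc j) < s!j" by auto
  have "same_order [s!i, s!j, s!Suc j] [3,2,1]"
    unfolding same_order_def using h by (simp add: All_less_Suc)
  then show "vcontains s pat_3_21" unfolding vcontains_def pat_3_21_def
    using h by (intro exI[of _ "[i,j,Suc j]"]) auto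
qed
lemma vc321: "vcontains s pat_3_21 \<longleftrightarrow> (\<exists>u v x y z. s = u @ [y,x] @ v \<and> z \<in> set u \<and> x < y \<and> y < z)"
proof
  assume "vcontains s pat_3_21"
  then obtain i j where h: "i < j" "Suc j < length s" "s!j < s!i" "s!(Suc j) < s!j"
    unfolding vc321_idx by auto
  have "s = take j s @ [s!j, s!Suc j] @ drop (Suc (Suc j)) s"
    using h by (simp add: Cons_nth_drop_Suc)
  moreover have "s!i \<in> set (take j s)"
  proof -
    have "(take j s) ! i = s ! i" using h by simp
    moreover have "i < length (take j s)" using h by simp
    ultimately show ?thesis by (metis nth_mem)
  qed
  ultimately show "\<exists>u v x y z. s = u @ [y,x] @ v \<and> z \<in> set u \<and> x < y \<and> y < z" using h by blast
next
  assume "\<exists>u v x y z. s = u @ [y,x] @ v \<and> z \<in> set u \<and> x < y \<and> y < z"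
  then obtain u v x y z where h: "s = u @ [y,x] @ v" "z \<in> set u" "x < y" "y < z" by blast
  then obtain i where i: "i < length u" "u!i = z" by (auto simp: in_set_conv_nth)
  show "vcontains s pat_3_21" unfolding vc321_idx
    apply (rule exI[of _ i], rule exI[of _ "length u"])
    using h i by (auto simp: nth_append)
qed

lemma vc_rev: "vcontains s pat_3_21 \<longleftrightarrow> \<not> noAsc3 (rev s)"
proof
  assume "vcontains s pat_3_21"
  then obtain u v x y z where h: "s = u @ [y,x] @ v" "z \<in> set u" "x < y" "y < z" unfolding vc321 by blast
  then have "rev s = rev v @ [x,y] @ rev u" by simp
  with h show "\<not> noAsc3 (rev s)" unfolding noAsc3_def by fastforce
next
  assume "\<not> noAsc3 (rev s)"
  then obtain u v x y z where h: "rev s = u @ [x,y] @ v" "z \<in> set v" "x < y" "y < z" unfolding noAsc3_def by blast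
  then have "s = rev v @ [y,x] @ rev u" by (metis rev_rev_ident rev_append rev.simps append.assoc append_Cons append_Nil)
  with h show "vcontains s pat_3_21" unfolding vc321 by fastforce
qed

lemma noAsc3_prefix: "noAsc3 (w @ w') \<Longrightarrow> noAsc3 w"
  unfolding noAsc3_def by fastforce

lemma vc_tail: "\<not> vcontains (y # st) pat_3_21 \<Longrightarrow> \<not> vcontains st pat_3_21"
  unfolding vc321 by (metis Cons_eq_appendI list.set_intros(2))

lemma M1: "\<sigma> = pat_3_21 \<Longrightarrow> noAsc3 (rev st @ xs) \<Longrightarrow> sc_run \<sigma> xs st out = out @ rev xs @ st"
proof (induction \<sigma> xs st out rule: sc_run.induct)
  case (1 \<sigma> st out) then show ?case by simp
next
  case (2 \<sigma> x xs out) then show ?case by simp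
next
  case (3 \<sigma> x xs y st out)
  have nv: "\<not> vcontains (x # y # st) \<sigma>"
  proof
    assume "vcontains (x # y # st) \<sigma>"
    then have "\<not> noAsc3 (rev (x # y # st))" using 3(3) vc_rev by simp
    moreover have "rev (y # st) @ x # xs = rev (x # y # st) @ xs" by simp
    ultimately show False using 3(4) noAsc3_prefix by metis
  qed
  then have "sc_run \<sigma> xs (x # y # st) out = out @ rev xs @ (x # y # st)"
    using 3 by simp
  then show ?case using nv by simp
qed

lemma stack_order: "subseq [p,q] st \<Longrightarrow> \<exists>r. sc_run \<sigma> xs st out = out @ r \<and> subseq [p,q] r"
proof (induction \<sigma> xs st out rule: sc_run.induct)
  case (1 \<sigma> st out) then show ?case by auto
next
  case (2 \<sigma> x xs out) then show ?case by simp
next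
  case (3 \<sigma> x xs y st out)
  show ?case
  proof (cases "vcontains (x # y # st) \<sigma>")
    case False
    have "subseq [p,q] (x # y # st)" by (rule list_emb_Cons[OF 3(3)])
    with 3(1) False obtain r where "sc_run \<sigma> xs (x # y # st) out = out @ r" "subseq [p,q] r" by auto
    with False show ?thesis by auto
  next
    case True
    show ?thesis
    proof (cases "p = y")
      case py: True
      then have "q \<in> set st" using 3(3) by (simp add: subseq_singleton_left)
      obtain r where r: "sc_run \<sigma> (x # xs) st (out @ [y]) = (out @ [y]) @ r" "mset r = mset (x#xs) + mset st"
        using sc_prefix by blast
      then have "q \<in> set r" using \<open>q \<in> set st\<close> by (metis set_mset_mset set_mset_union UnI2)
      then have "subseq [p,q] (y # r)" using py by (simp add: subseq_singleton_left)
      with True r show ?thesis by (intro exI[of _ "y # r"]) auto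
    next
      case False
      then have "subseq [p,q] st" using 3(3) by simp
      with 3(2) True obtain r where r: "sc_run \<sigma> (x # xs) st (out @ [y]) = (out @ [y]) @ r" "subseq [p,q] r" by auto
      have "subseq [p,q] (y # r)" by (rule list_emb_Cons[OF r(2)])
      with True r(1) show ?thesis by (intro exI[of _ "y # r"]) simp
    qed
  qed
qed




lemma has231_mono: "has231 w \<Longrightarrow> subseq w w' \<Longrightarrow> has231 w'"
  unfolding has231_def using subseq_order.order_trans by blast

lemma pop231: "\<not> vcontains st pat_3_21 \<Longrightarrow> st = u @ [b,a] @ v \<Longrightarrow> a < b \<Longrightarrow> b < x \<Longrightarrow>
  has231 (sc_run pat_3_21 (x # xs) st out)"
proof (induction st arbitrary: u a b v out)
  case Nil then show ?case by simp
next
  case (Cons y st')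
  note prems = Cons.prems
  note IH = Cons.IH
  have blk: "vcontains (x # y # st') pat_3_21"
    unfolding vc321 using prems(2-4)
    by (intro exI[of _ "x # u"] exI[of _ v] exI[of _ a] exI[of _ b] exI[of _ x]) simp
  then have run: "sc_run pat_3_21 (x # xs) (y # st') out = sc_run pat_3_21 (x # xs) st' (out @ [y])" by simp
  have inv': "\<not> vcontains st' pat_3_21" using prems(1) vc_tail by blast
  show ?case
  proof (cases u)
    case (Cons u0 u')
    then have "st' = u' @ [b,a] @ v" using prems(2) by simp
    then have "has231 (sc_run pat_3_21 (x # xs) st' (out @ [y]))" using IH inv' prems(3,4) by blast
    then show ?thesis using run by simp
  next
    case Nil
    then have yb: "y = b" and st': "st' = a # v" using prems(2) by simp_all
    show ?thesis
    proof (cases "\<exists>u1 v1 a1 b1. st' = u1 @ [b1,a1] @ v1 \<and> a1 < b1 \<and> b1 < x")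
      case True
      then obtain u1 v1 a1 b1 where "st' = u1 @ [b1,a1] @ v1" "a1 < b1" "b1 < x" by blast
      then have "has231 (sc_run pat_3_21 (x # xs) st' (out @ [y]))" using IH inv' by blast
      then show ?thesis using run by simp
    next
      case False
      have nb: "\<not> vcontains (x # a # v) pat_3_21"
      proof
        assume "vcontains (x # a # v) pat_3_21"
        then obtain u2 v2 x2 y2 z2 where h2: "x # a # v = u2 @ [y2,x2] @ v2" "z2 \<in> set u2" "x2 < y2" "y2 < z2"
          unfolding vc321 by blast
        then obtain u3 where u2: "u2 = x # u3" by (cases u2) auto
        then have av: "a # v = u3 @ [y2,x2] @ v2" using h2 by simp
        show False
        proof (cases "z2 = x")
          case True then show False using False av h2 st' by blast
        next
          case False then have "z2 \<in> set u3" using h2 u2 by simp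
          then have "vcontains (a # v) pat_3_21" unfolding vc321 using av h2 by blast
          then show False using inv' st' by simp
        qed
      qed
      have run2: "sc_run pat_3_21 (x # xs) (a # v) (out @ [b]) = sc_run pat_3_21 xs (x # a # v) (out @ [b])"
        using nb by simp
      have "subseq [x,a] (x # a # v)" by simp
      then obtain r where r: "sc_run pat_3_21 xs (x # a # v) (out @ [b]) = (out @ [b]) @ r" "subseq [x,a] r"
        using stack_order by blast
      have "subseq [b,x,a] (b # r)" using r(2) by simp
      then have "subseq [b,x,a] (out @ b # r)" by (rule list_emb_append2)
      then have "has231 (out @ b # r)" unfolding has231_def using prems(3,4) by blast
      then show ?thesis using run run2 r(1) yb st' by simp
    qed
  qed
qed

lemma M2: "\<sigma> = pat_3_21 \<Longrightarrow> \<not> vcontains st pat_3_21 \<Longrightarrow> \<not> has231 (sc_run \<sigma> xs st out) \<Longrightarrow> noAsc3 (rev st @ xs)"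
proof (induction \<sigma> xs st out rule: sc_run.induct)
  case (1 \<sigma> st out) then show ?case using vc_rev by simp
next
  case (2 \<sigma> x xs out)
  have "\<not> vcontains [x] pat_3_21" unfolding vc321 by (auto dest: arg_cong[of _ _ length])
  then have "noAsc3 (rev [x] @ xs)" using 2 by simp
  then show ?case by simp
next
  case (3 \<sigma> x xs y st out)
  show ?case
  proof (cases "vcontains (x # y # st) \<sigma>")
    case False
    then have "noAsc3 (rev (x # y # st) @ xs)" using 3 by simp
    then show ?thesis by simp
  next
    case True
    then have "vcontains (x # y # st) pat_3_21" using 3(3) by simp
    then obtain u v a b z where h: "x # y # st = u @ [b,a] @ v" "z \<in> set u" "a < b" "b < z"
      unfolding vc321 by blast
    then obtain u' where u: "u = x # u'" by (cases u) auto
    have ys: "y # st = u' @ [b,a] @ v" using h u by simp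
    have "z = x"
    proof (rule ccontr)
      assume "z \<noteq> x"
      then have "z \<in> set u'" using h u by simp
      then have "vcontains (y # st) pat_3_21" unfolding vc321 using ys h by blast
      then show False using 3(4) by simp
    qed
    have "b < x" using h(4) \<open>z = x\<close> by simp
    have "has231 (sc_run pat_3_21 (x # xs) (y # st) out)" by (rule pop231[OF 3(4) ys h(3) \<open>b < x\<close>])
    then show ?thesis using 3(3,5) by simp
  qed
qed

lemma vc21_sorted:
  assumes s: "sorted (y # st)"
  shows "vcontains (x # y # st) ([2,1],{}) \<longleftrightarrow> y < x"
proof
  assume "vcontains (x # y # st) ([2,1],{})"
  then obtain i j where h: "i < j" "j < length (x # y # st)" "(x # y # st)!j < (x # y # st)!i"
    unfolding vc21 by blast
  obtain j' where j: "j = Suc j'" using h by (cases j) auto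
  show "y < x"
  proof (cases i)
    case 0
    have "(y # st)!0 \<le> (y # st)!j'" using sorted_nth_mono[OF s, of 0 j'] h j by simp
    then show ?thesis using h 0 j by simp
  next
    case (Suc i')
    have "(y # st)!i' \<le> (y # st)!j'" using sorted_nth_mono[OF s, of i' j'] h Suc j by simp
    then show ?thesis using h Suc j by simp
  qed
next
  assume "y < x"
  then show "vcontains (x # y # st) ([2,1],{})" unfolding vc21
    by (intro exI[of _ 0] exI[of _ 1]) simp
qed

lemma vc21_mem: "b \<in> set st \<Longrightarrow> b < x \<Longrightarrow> vcontains (x # st) ([2,1],{})"
proof -
  assume "b \<in> set st" "b < x"
  then obtain j where "j < length st" "st!j = b" by (auto simp: in_set_conv_nth)
  then show ?thesis unfolding vc21 using \<open>b < x\<close>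
    by (intro exI[of _ 0] exI[of _ "Suc j"]) simp
qed

lemma W_sorted: "\<sigma> = ([2,1],{}) \<Longrightarrow> sorted out \<Longrightarrow> sorted st \<Longrightarrow> (\<forall>oo\<in>set out. \<forall>v\<in>set st \<union> set xs. oo \<le> v)
  \<Longrightarrow> \<not> has231 (rev st @ xs) \<Longrightarrow> sorted (sc_run \<sigma> xs st out)"
proof (induction \<sigma> xs st out rule: sc_run.induct)
  case (1 \<sigma> st out) then show ?case by (auto simp: sorted_append)
next
  case (2 \<sigma> x xs out)
  have "sorted (sc_run \<sigma> xs [x] out)" by (rule 2(1)) (use 2(2-6) in auto)
  then show ?case by simp
next
  case (3 \<sigma> x xs y st out)
  have iff: "vcontains (x # y # st) \<sigma> \<longleftrightarrow> y < x" using vc21_sorted[OF 3(5)] 3(3) by simp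
  show ?case
  proof (cases "y < x")
    case True
    have s1: "sorted (out @ [y])" using 3(4,6) by (auto simp: sorted_append)
    have s2: "sorted st" using 3(5) by simp
    have bnd: "\<forall>oo\<in>set (out @ [y]). \<forall>v\<in>set st \<union> set (x # xs). oo \<le> v"
    proof (intro ballI)
      fix oo v assume o: "oo \<in> set (out @ [y])" and v: "v \<in> set st \<union> set (x # xs)"
      show "oo \<le> v"
      proof (cases "oo = y")
        case False
        then show ?thesis using o v 3(6) by auto
      next
        case oy: True
        show ?thesis
        proof (cases "v \<in> set xs")
          case vx: True
          show ?thesis
          proof (rule ccontr)
            assume "\<not> oo \<le> v"
            then have vy: "v < y" using oy by simp
            have "subseq [v] xs" using vx by (simp add: subseq_singleton_left)
            then have "subseq [y,x,v] (y # x # xs)" by simp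
            then have "subseq [y,x,v] (rev st @ y # x # xs)" by (rule list_emb_append2)
            then have "has231 (rev (y # st) @ x # xs)" unfolding has231_def using vy True by auto
            then show False using 3(7) by simp
          qed
        next
          case False
          then show ?thesis using v oy True 3(5) by auto
        qed
      qed
    qed
    have "subseq (x # xs) (y # x # xs)" by (rule list_emb_Cons) simp
    then have "subseq (rev st @ x # xs) (rev st @ y # x # xs)" by (simp only: subseq_append')
    then have nh: "\<not> has231 (rev st @ x # xs)" using 3(7) has231_mono by auto
    have "sorted (sc_run \<sigma> (x # xs) st (out @ [y]))"
    proof -
      have c: "\<not> \<not> vcontains (x # y # st) \<sigma>" using iff True by simp
      show ?thesis using 3(2)[OF c 3(3) s1 s2 bnd nh] .
    qed
    then show ?thesis using iff True by simp
  next
    case False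
    have "x \<le> y" using False by simp
    then have s2: "sorted (x # y # st)" using 3(5) sorted2 by blast
    have bnd: "\<forall>oo\<in>set out. \<forall>v\<in>set (x # y # st) \<union> set xs. oo \<le> v" using 3(6) by auto
    have nh: "\<not> has231 (rev (x # y # st) @ xs)" using 3(7) by simp
    have "\<not> vcontains (x # y # st) \<sigma>" using iff False by simp
    then have "sorted (sc_run \<sigma> xs (x # y # st) out)" using 3(1) 3(3,4) s2 bnd nh by blast
    then show ?thesis using iff False by simp
  qed
qed

lemma W2: "\<sigma> = ([2,1],{}) \<Longrightarrow> b \<in> set st \<Longrightarrow> subseq [c,a] xs \<Longrightarrow> a < b \<Longrightarrow> b < c \<Longrightarrow>
  subseq [b,a] (sc_run \<sigma> xs st out)"
proof (induction \<sigma> xs st out rule: sc_run.induct)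
  case (1 \<sigma> st out) then show ?case by simp
next
  case (2 \<sigma> x xs out) then show ?case by simp
next
  case (3 \<sigma> x xs y st out)
  show ?case
  proof (cases "vcontains (x # y # st) \<sigma>")
    case False
    have "x \<noteq> c"
    proof
      assume "x = c"
      then have "vcontains (x # y # st) ([2,1],{})" using vc21_mem[OF 3(4)] 3(7) by simp
      then show False using False 3(3) by simp
    qed
    then have "subseq [c,a] xs" using 3(5) by simp
    then have "subseq [b,a] (sc_run \<sigma> xs (x # y # st) out)" using 3(1) False 3(3,4,6,7) by simp
    then show ?thesis using False by simp
  next
    case True
    show ?thesis
    proof (cases "y = b")
      case yb: True
      obtain r where r: "sc_run \<sigma> (x # xs) st (out @ [y]) = (out @ [y]) @ r" "mset r = mset (x # xs) + mset st"
        using sc_prefix by blast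
      have "subseq [a] [c,a]" by simp
      then have "subseq [a] (x # xs)" using 3(5) by (rule subseq_order.order_trans)
      then have "a \<in> set (x # xs)" by (simp only: subseq_singleton_left)
      then have "a \<in> set r" using r(2) by (metis set_mset_mset set_mset_union UnI1)
      then have "subseq [b,a] (b # r)" by (simp add: subseq_singleton_left)
      then have "subseq [b,a] (out @ b # r)" by (rule list_emb_append2)
      then show ?thesis using True r(1) yb by simp
    next
      case False
      then have "b \<in> set st" using 3(4) by simp
      then have "subseq [b,a] (sc_run \<sigma> (x # xs) st (out @ [y]))" using 3(2) True 3(3,5,6,7) by simp
      then show ?thesis using True by simp
    qed
  qed
qed

lemma W3: "\<sigma> = ([2,1],{}) \<Longrightarrow> subseq [b,c,a] xs \<Longrightarrow> a < b \<Longrightarrow> b < c \<Longrightarrow>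
  subseq [b,a] (sc_run \<sigma> xs st out)"
proof (induction \<sigma> xs st out rule: sc_run.induct)
  case (1 \<sigma> st out) then show ?case by simp
next
  case (2 \<sigma> x xs out)
  show ?case
  proof (cases "x = b")
    case True
    then have "subseq [c,a] xs" using 2(3) by simp
    then have "subseq [b,a] (sc_run \<sigma> xs [x] out)" using W2[of \<sigma> b "[x]" c a xs out] 2(2,4,5) True by simp
    then show ?thesis by simp
  next
    case False
    then have "subseq [b,c,a] xs" using 2(3) by simp
    then show ?thesis using 2 by simp
  qed
next
  case (3 \<sigma> x xs y st out)
  show ?case
  proof (cases "vcontains (x # y # st) \<sigma>")
    case False
    show ?thesis
    proof (cases "x = b")
      case True
      then have "subseq [c,a] xs" using 3(4) by simp
      then have "subseq [b,a] (sc_run \<sigma> xs (x # y # st) out)" using W2[of \<sigma> b "x # y # st" c a xs out] 3(3,5,6) True by simp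
      then show ?thesis using False by simp
    next
      case xb: False
      then have "subseq [b,c,a] xs" using 3(4) by simp
      then show ?thesis using 3(1) False 3(3,5,6) by simp
    qed
  next
    case True
    then show ?thesis using 3(2) 3(3-6) by simp
  qed
qed

lemma sorted_sub2: "sorted w \<Longrightarrow> subseq [b,a] w \<Longrightarrow> b \<le> a"
  by (auto simp: sub2_iff sorted_append)



lemma adj_asc: "(w::nat list) \<noteq> [] \<Longrightarrow> hd w < last w \<Longrightarrow> \<exists>u v x y. w = u @ [x,y] @ v \<and> x < y"
proof (induction w)
  case Nil then show ?case by simp
next
  case (Cons a w)
  show ?case
  proof (cases "w = []")
    case True then show ?thesis using Cons.prems by simp
  next
    case False
    show ?thesis
    proof (cases "a < hd w")
      case True
      have "a # w = [] @ [a, hd w] @ tl w" using False by simp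
      then show ?thesis using True by blast
    next
      case ah: False
      then have "hd w < last w" using Cons.prems False by simp
      then obtain u v x y where "w = u @ [x,y] @ v" "x < y" using Cons.IH False by blast
      then have "a # w = (a # u) @ [x,y] @ v" "x < y" by simp_all
      then show ?thesis by blast
    qed
  qed
qed

lemma h132: "subseq [A,C,B] \<pi> \<Longrightarrow> A < B \<Longrightarrow> B < C \<Longrightarrow> has231 (rev \<pi>)"
proof -
  assume s: "subseq [A,C,B] \<pi>" and "A < B" "B < C"
  have "subseq (rev [A,C,B]) (rev \<pi>)" by (rule subseq_rev[OF s])
  then have "subseq [B,C,A] (rev \<pi>)" by simp
  then show ?thesis unfolding has231_def using \<open>A < B\<close> \<open>B < C\<close> by blast
qed

lemma comb: "distinct \<pi> \<Longrightarrow> noAsc3 \<pi> \<Longrightarrow> \<not> goodP \<pi> \<Longrightarrow> has231 (rev \<pi>)"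
proof -
  assume d: "distinct \<pi>" and na: "noAsc3 \<pi>" and "\<not> goodP \<pi>"
  then obtain a b c where abc: "subseq [a,b,c] \<pi>" "a < b" "a < c" unfolding goodP_def by blast
  then obtain p q r s where pi: "\<pi> = p @ a # q @ b # r @ c # s" by (auto simp: sub3_iff)
  show ?thesis
  proof (cases "c < b")
    case True then show ?thesis using h132[OF abc(1)] abc by simp
  next
    case False
    have "b \<noteq> c" using d pi by auto
    with False have bc: "b < c" by simp
    show ?thesis
    proof (cases "\<exists>e\<in>set q. c < e")
      case True
      then obtain e where e: "e \<in> set q" "c < e" by blast
      then obtain q1 q2 where "q = q1 @ e # q2" by (meson split_list)
      then have "\<pi> = p @ a # q1 @ e # (q2 @ b # r) @ c # s" using pi by simp
      then have "subseq [a,e,c] \<pi>" unfolding sub3_iff by blast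
      then show ?thesis using h132 abc e by blast
    next
      case False
      have cq: "c \<notin> set q" using d pi by auto
      have qc: "\<forall>e\<in>set q. e < c" using False cq by (metis linorder_neqE_nat)
      define w where "w = a # q @ [b]"
      have "w \<noteq> []" "hd w < last w" using abc unfolding w_def by simp_all
      then obtain u v x y where w: "w = u @ [x,y] @ v" "x < y" using adj_asc by blast
      have "y \<in> set w" using w by simp
      then have yc: "y < c" using qc abc bc unfolding w_def by auto
      have "\<pi> = (p @ u) @ [x,y] @ (v @ r @ c # s)" using pi w unfolding w_def by (metis append.assoc append_Cons append_Nil)
      moreover have "c \<in> set (v @ r @ c # s)" by simp
      ultimately have "\<not> noAsc3 \<pi>" unfolding noAsc3_def using w(2) yc by blast
      then show ?thesis using na by simp
    qed
  qed
qed

lemma good_noAsc3: "goodP \<pi> \<Longrightarrow> noAsc3 \<pi>"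
proof -
  assume g: "goodP \<pi>"
  show "noAsc3 \<pi>" unfolding noAsc3_def
  proof
    assume "\<exists>u v x y z. \<pi> = u @ [x,y] @ v \<and> z \<in> set v \<and> x < y \<and> y < z"
    then obtain u v x y z where h: "\<pi> = u @ [x,y] @ v" "z \<in> set v" "x < y" "y < z" by blast
    then obtain v1 v2 where "v = v1 @ z # v2" by (meson split_list)
    then have "\<pi> = u @ x # [] @ y # v1 @ z # v2" using h by simp
    then have sx: "subseq [x,y,z] \<pi>" unfolding sub3_iff by blast
    have "x < z" using h by simp
    then show False using g sx h(3) unfolding goodP_def by blast
  qed
qed

lemma good_no231: "goodP \<pi> \<Longrightarrow> \<not> has231 (rev \<pi>)"
proof
  assume g: "goodP \<pi>" and "has231 (rev \<pi>)"
  then obtain a b c where h: "subseq [b,c,a] (rev \<pi>)" "a < b" "b < c" unfolding has231_def by blast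
  have "subseq (rev [b,c,a]) (rev (rev \<pi>))" by (rule subseq_rev[OF h(1)])
  then have sx: "subseq [a,c,b] \<pi>" by simp
  have "a < c" using h by simp
  then show False using g sx h(2) unfolding goodP_def by blast
qed

lemma good_contains: "contains \<pi> \<tau> \<Longrightarrow> goodP \<pi> \<Longrightarrow> goodP \<tau>"
proof -
  assume c: "contains \<pi> \<tau>" and g: "goodP \<pi>"
  from c obtain ys where ys: "subseq ys \<pi>" "same_order ys \<tau>" unfolding contains_def by blast
  show "goodP \<tau>" unfolding goodP_def
  proof
    assume "\<exists>a b c. subseq [a,b,c] \<tau> \<and> a < b \<and> a < c"
    then obtain a b c where h: "subseq [a,b,c] \<tau>" "a < b" "a < c" by blast
    from sub3_idx[OF h(1)] obtain i j k where ijk: "i < j" "j < k" "k < length \<tau>" "\<tau>!i = a" "\<tau>!j = b" "\<tau>!k = c"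
      by blast
    have len: "length ys = length \<tau>" using ys(2) unfolding same_order_def by (rule conjunct1)
    have so: "\<forall>i'<length ys. \<forall>j'<length ys. (ys!i' < ys!j') = (\<tau>!i' < \<tau>!j')"
      using ys(2) unfolding same_order_def by (rule conjunct2)
    have lt1: "ys!i < ys!j" using so[rule_format, of i j] ijk h len by simp
    have lt2: "ys!i < ys!k" using so[rule_format, of i k] ijk h len by simp
    have "subseq [ys!i, ys!j, ys!k] ys" by (rule idx_sub3) (use ijk len in simp_all)
    then have sx: "subseq [ys!i, ys!j, ys!k] \<pi>" using ys(1) by (rule subseq_order.order_trans)
    show False using g lt1 lt2 sx unfolding goodP_def by blast
  qed
qed

lemma perm_sortable: "is_perm \<pi> \<Longrightarrow> goodP \<pi> \<Longrightarrow> west_s (SC pat_3_21 \<pi>) = [1..<Suc (length \<pi>)]"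
proof -
  assume p: "is_perm \<pi>" and g: "goodP \<pi>"
  have "noAsc3 (rev [] @ \<pi>)" using good_noAsc3[OF g] by simp
  then have "sc_run pat_3_21 \<pi> [] [] = [] @ rev \<pi> @ []" by (rule M1[OF refl])
  then have sc: "SC pat_3_21 \<pi> = rev \<pi>" unfolding SC_def by simp
  have "\<not> has231 (rev [] @ rev \<pi>)" using good_no231[OF g] by simp
  then have srt: "sorted (sc_run ([2,1],{}) (rev \<pi>) [] [])" by (intro W_sorted) auto
  obtain r where r: "sc_run ([2,1],{}) (rev \<pi>) [] [] = [] @ r" "mset r = mset (rev \<pi>) + mset []"
    using sc_prefix by blast
  have ws: "west_s (SC pat_3_21 \<pi>) = r" using r(1) sc unfolding west_s_def SC_def by simp
  have mr: "mset r = mset \<pi>" using r(2) by simp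
  have "distinct r" using mr p unfolding is_perm_def by (metis mset_eq_imp_distinct_iff)
  moreover have "set r = set \<pi>" using mr by (rule mset_eq_setD)
  moreover have "sorted r" using srt r(1) by simp
  ultimately show ?thesis unfolding ws using p unfolding is_perm_def
    by (intro sorted_distinct_set_unique) (auto simp del: upt_Suc simp: atLeastLessThanSuc_atLeastAtMost sorted_upt)
qed

lemma sortable_good: "is_perm \<pi> \<Longrightarrow> west_s (SC pat_3_21 \<pi>) = [1..<Suc (length \<pi>)] \<Longrightarrow> goodP \<pi>"
proof (rule ccontr)
  assume p: "is_perm \<pi>" and eq: "west_s (SC pat_3_21 \<pi>) = [1..<Suc (length \<pi>)]" and ng: "\<not> goodP \<pi>"
  have nh: "\<not> has231 (SC pat_3_21 \<pi>)"
  proof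
    assume "has231 (SC pat_3_21 \<pi>)"
    then obtain a b c where h: "subseq [b,c,a] (SC pat_3_21 \<pi>)" "a < b" "b < c" unfolding has231_def by blast
    then have "subseq [b,a] (sc_run ([2,1],{}) (SC pat_3_21 \<pi>) [] [])" by (intro W3[OF refl]) auto
    then have "subseq [b,a] [1..<Suc (length \<pi>)]" using eq unfolding west_s_def SC_def by simp
    then have "b \<le> a" by (rule sorted_sub2[rotated]) (simp del: upt_Suc add: sorted_upt)
    then show False using h by simp
  qed
  have "\<not> vcontains [] pat_3_21" unfolding vc321 by simp
  then have "noAsc3 (rev [] @ \<pi>)" using M2[OF refl] nh unfolding SC_def by blast
  then have na: "noAsc3 \<pi>" by simp
  have "sc_run pat_3_21 \<pi> [] [] = [] @ rev \<pi> @ []" by (rule M1[OF refl]) (use na in simp)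
  then have "SC pat_3_21 \<pi> = rev \<pi>" unfolding SC_def by simp
  moreover have "has231 (rev \<pi>)" using comb p na ng unfolding is_perm_def by blast
  ultimately show False using nh by simp
qed

theorem mainTheorem16:
  shows "perm_class (Sort pat_3_21)"
proof -
  have mem: "\<pi> \<in> Sort pat_3_21 \<longleftrightarrow> is_perm \<pi> \<and> \<pi> \<noteq> [] \<and> west_s (SC pat_3_21 \<pi>) = [1..<Suc (length \<pi>)]" for \<pi>
    unfolding Sort_def Sort_n_def perms_def by (auto simp: Suc_le_eq)
  have c1: "\<forall>\<pi>\<in>Sort pat_3_21. is_perm \<pi> \<and> \<pi> \<noteq> []" using mem by blast
  have c2: "\<forall>\<pi>\<in>Sort pat_3_21. \<forall>\<tau>. is_perm \<tau> \<and> \<tau> \<noteq> [] \<and> contains \<pi> \<tau> \<longrightarrow> \<tau> \<in> Sort pat_3_21"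
  proof (intro ballI allI impI)
    fix \<pi> \<tau> assume a: "\<pi> \<in> Sort pat_3_21" and b: "is_perm \<tau> \<and> \<tau> \<noteq> [] \<and> contains \<pi> \<tau>"
    then have "goodP \<pi>" using mem sortable_good by blast
    then have "goodP \<tau>" using good_contains b by blast
    then show "\<tau> \<in> Sort pat_3_21" using mem perm_sortable b by blast
  qed
  show ?thesis unfolding perm_class_def using c1 c2 by blast
qed

end
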